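(* Let $p\ge 1$, let $n_1,\dots,n_p\ge1$ and $k_s\in[n_s]$ for each $s$. If $\mathcal{F}\subseteq\prod_{s}\binom{[n_s]}{k_s}$ is intersecting and shifted, then $P(F)\cap P(G)\neq\emptyset$ for any $F,G\in \mathcal{F}$.
   Context: Multi-part setting: the ground set is the disjoint union $\bigsqcup_{s=1}^p [n_s]$ of $p$ parts, $[n]=\{1,\dots,n\}$. For $F_s\subseteq[n_s]$, $\bigsqcup_s F_s$ denotes the subset having $F_s$ in part $s$; $\prod_{s}\binom{[n_s]}{k_s}$ is the collection of all $\bigsqcup_s F_s$ with $|F_s|=k_s$ for all $s$. A family is intersecting if any two of its sets intersect (in some part). Shifting: for $t\in[p]$, $1\le i<j\le n_t$ and $F=\bigsqcup_s F_s$, $S_t^{i,j}(F)=F$ if $i\in F_t$ or $j\notin F_t$, and otherwise $S_t^{i,j}(F)$ replaces $F_t$ by $(F_t\setminus\{j\})\cup\{i\}$. For a family, $S_t^{i,j}(\mathcal F)=\{S_t^{i,j}(F):F\in\mathcal F\}\cup\{F: F\in\mathcal F,\ S_t^{i,j}(F)\in\mathcal F\}$. $\mathcal F$ is shifted if $S_t^{i,j}(\mathcal F)=\mathcal F$ for all $t\in[p]$ and all $1\le i<j\le n_t$. Projection: for $F=\bigsqcup_s F_s$, let $P_s(F)=F_s\cap[2k_s]$ and $P(F)=\bigsqcup_s P_s(F)$ (the first $2k_s$ elements of each part $s$ that lie in $F$). *)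

theory Defs
  imports Main
begin

text \<open>A subset of the disjoint union of parts [n_1],...,[n_p] is represented as a set of
pairs (s, x) meaning element x of part s.\<close>

definition ground :: "nat \<Rightarrow> (nat \<Rightarrow> nat) \<Rightarrow> (nat \<times> nat) set" where
  "ground p n = {(s, x). s \<in> {1..p} \<and> x \<in> {1..n s}}"

definition part :: "(nat \<times> nat) set \<Rightarrow> nat \<Rightarrow> nat set" where
  "part F s = {x. (s, x) \<in> F}"

definition prod_family :: "nat \<Rightarrow> (nat \<Rightarrow> nat) \<Rightarrow> (nat \<Rightarrow> nat) \<Rightarrow> (nat \<times> nat) set set" where
  "prod_family p n k = {F. F \<subseteq> ground p n \<and> (\<forall>s\<in>{1..p}. card (part F s) = k s)}"

definition intersecting :: "(nat \<times> nat) set set \<Rightarrow> bool" where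
  "intersecting \<F> \<longleftrightarrow> (\<forall>F\<in>\<F>. \<forall>G\<in>\<F>. F \<inter> G \<noteq> {})"

definition shift :: "nat \<Rightarrow> nat \<Rightarrow> nat \<Rightarrow> (nat \<times> nat) set \<Rightarrow> (nat \<times> nat) set" where
  "shift t i j F = (if i \<in> part F t \<or> j \<notin> part F t then F
                    else (F - {(t, j)}) \<union> {(t, i)})"

definition shift_family :: "nat \<Rightarrow> nat \<Rightarrow> nat \<Rightarrow> (nat \<times> nat) set set \<Rightarrow> (nat \<times> nat) set set" where
  "shift_family t i j \<F> = shift t i j ` \<F> \<union> {F \<in> \<F>. shift t i j F \<in> \<F>}"

definition shifted :: "nat \<Rightarrow> (nat \<Rightarrow> nat) \<Rightarrow> (nat \<times> nat) set set \<Rightarrow> bool" where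
  "shifted p n \<F> \<longleftrightarrow>
     (\<forall>t\<in>{1..p}. \<forall>i j. 1 \<le> i \<and> i < j \<and> j \<le> n t \<longrightarrow> shift_family t i j \<F> = \<F>)"

definition proj :: "(nat \<Rightarrow> nat) \<Rightarrow> (nat \<times> nat) set \<Rightarrow> (nat \<times> nat) set" where
  "proj k F = {(s, x) \<in> F. x \<le> 2 * k s}"

end

theory Submission
  imports Defs
begin

theorem lemma3p1:
  fixes p :: nat and n k :: "nat \<Rightarrow> nat" and \<F> :: "(nat \<times> nat) set set"
  assumes "p \<ge> 1"
    and "\<forall>s\<in>{1..p}. n s \<ge> 1"
    and "\<forall>s\<in>{1..p}. 1 \<le> k s \<and> k s \<le> n s"
    and "\<F> \<subseteq> prod_family p n k"
    and "intersecting \<F>"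
    and "shifted p n \<F>"
  shows "\<forall>F\<in>\<F>. \<forall>G\<in>\<F>. proj k F \<inter> proj k G \<noteq> {}"
proof -
  have fin_ground: "finite (ground p n)"
  proof -
    have "ground p n \<subseteq> {1..p} \<times> (\<Union>s\<in>{1..p}. {1..n s})"
      unfolding ground_def by auto
    moreover have "finite ({1..p} \<times> (\<Union>s\<in>{1..p}. {1..n s}))" by auto
    ultimately show ?thesis by (rule finite_subset)
  qed
  have main: "\<And>F G. F \<in> \<F> \<Longrightarrow> G \<in> \<F> \<Longrightarrow> card (F \<inter> G) = m \<Longrightarrow>
      proj k F \<inter> proj k G = {} \<Longrightarrow> False" for m
  proof (induction m rule: less_induct)
    case (less m F G)
    have FG: "F \<subseteq> ground p n" "G \<subseteq> ground p n"
      "\<forall>s\<in>{1..p}. card (part F s) = k s" "\<forall>s\<in>{1..p}. card (part G s) = k s"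
      using assms(4) less.prems unfolding prod_family_def by auto
    have "F \<inter> G \<noteq> {}" using assms(5) less.prems unfolding intersecting_def by auto
    then obtain t j where tj: "(t, j) \<in> F" "(t, j) \<in> G" by auto
    have t: "t \<in> {1..p}" and j: "1 \<le> j" "j \<le> n t"
      using tj FG unfolding ground_def by auto
    have j2: "j > 2 * k t"
    proof (rule ccontr)
      assume "\<not> ?thesis"
      then have "(t, j) \<in> proj k F \<inter> proj k G" using tj unfolding proj_def by auto
      then show False using less.prems by auto
    qed
    have finF: "finite (part F t)"
    proof -
      have "part F t \<subseteq> {1..n t}" using FG unfolding part_def ground_def by auto
      then show ?thesis using finite_subset by blast
    qed
    have finG: "finite (part G t)"
    proof -
      have "part G t \<subseteq> {1..n t}" using FG unfolding part_def ground_def by auto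
      then show ?thesis using finite_subset by blast
    qed
    define A where "A = part F t \<inter> {1..2 * k t}"
    define B where "B = part G t \<inter> {1..2 * k t}"
    have AB: "A \<inter> B = {}"
    proof (rule ccontr)
      assume "A \<inter> B \<noteq> {}"
      then obtain x where "x \<in> A" "x \<in> B" by auto
      then have "(t, x) \<in> proj k F \<inter> proj k G"
        unfolding A_def B_def part_def proj_def by auto
      then show False using less.prems by auto
    qed
    have "A \<subseteq> part F t - {j}" using j2 unfolding A_def by auto
    then have cA: "card A \<le> k t - 1"
      using card_mono[OF _ \<open>A \<subseteq> _\<close>] finF FG(3) t tj(1)
      by (simp add: part_def)
    have "B \<subseteq> part G t - {j}" using j2 unfolding B_def by auto
    then have cB: "card B \<le> k t - 1"
      using card_mono[OF _ \<open>B \<subseteq> _\<close>] finG FG(4) t tj(2)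
      by (simp add: part_def)
    have kt: "k t \<ge> 1" using assms(3) t by auto
    have "card (A \<union> B) \<le> card A + card B" by (rule card_Un_le)
    also have "\<dots> < card {1..2 * k t}" using cA cB kt by simp
    finally have "\<not> {1..2 * k t} \<subseteq> A \<union> B"
      using card_mono[of "A \<union> B" "{1..2 * k t}"] by (auto simp: A_def B_def)
    then obtain i where i0: "i \<in> {1..2 * k t}" "i \<notin> A \<union> B" by blast
    then have i: "i \<in> {1..2 * k t}" "i \<notin> A" "i \<notin> B" by auto
    then have iF: "i \<notin> part F t" and iG: "i \<notin> part G t"
      unfolding A_def B_def by auto
    have ij: "1 \<le> i" "i < j" using i j2 by auto
    define G' where "G' = shift t i j G"
    have G'eq: "G' = (G - {(t, j)}) \<union> {(t, i)}"
      using iG tj(2) unfolding G'_def shift_def part_def by auto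
    have "G' \<in> shift_family t i j \<F>"
      unfolding shift_family_def G'_def using less.prems(2) by auto
    then have G'in: "G' \<in> \<F>"
      using assms(6) t ij j unfolding shifted_def by auto
    have tiF: "(t, i) \<notin> F" using iF unfolding part_def by auto
    have disj: "proj k F \<inter> proj k G' = {}"
      using less.prems(4) tiF unfolding G'eq proj_def by auto
    have inter: "F \<inter> G' = (F \<inter> G) - {(t, j)}"
      using tiF unfolding G'eq by auto
    have finFG: "finite (F \<inter> G)" using FG fin_ground finite_subset by blast
    have "card (F \<inter> G') < m"
      unfolding inter less.prems(3)[symmetric]
      using finFG tj card_Diff1_less[of "F \<inter> G" "(t, j)"] by blast
    then show False using less.IH[OF _ less.prems(1) G'in refl disj] by blast
  qed
  show ?thesis using main by blast
qed

end
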